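(* Assume $\lambda<\lambda_c$. Let $x\neq y$ be two points of $\mathbb Z^d$ and let $(\Omega,\mathcal F,\mathbf P)$ be the probability space carrying the i.i.d. family $\{(\sigma^{z,\mathrm{sum}},R^{z,\max})\}_{z\in\mathbb Z^d}$ from which the clumps and clump heights $\{(\widehat C^z,\widehat\sigma^z)\}_{z}$ are built. There exists an extension $(\underline\Omega,\underline{\mathcal F},\underline{\mathbf P})$ of this probability space carrying another i.i.d. family $\{(\underline\sigma^{z,\mathrm{sum}},\underline R^{z,\max})\}_{z\in\mathbb Z^d}$ (with the same law) and a pair $(\widehat{\underline C}^y,\widehat{\underline\sigma}^y)$ built from this new family in the same way as $(\widehat C^y,\widehat\sigma^y)$ is built from the original family, such that: (1) $\widehat C^x\cup\widehat C^y\subseteq \widehat C^x\cup\widehat{\underline C}^y$ almost surely; (2) the pairs $(\widehat C^x,\widehat\sigma^x)$ and $(\widehat{\underline C}^y,\widehat{\underline\sigma}^y)$ are independent under $\underline{\mathbf P}$; (3) $(\widehat{\underline C}^y,\widehat{\underline\sigma}^y)$ under $\underline{\mathbf P}$ has the same law as $(\widehat C^y,\widehat\sigma^y)$ under $\mathbf P$.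
   Context: Discrete Boolean model on $\mathbb Z^d$ with parameter $\lambda>0$: let $\{M^z\}_{z\in\mathbb Z^d}$ be i.i.d. Poisson($\lambda$) random variables. At each site $z$, $M^z$ items arrive; the $i$-th carries a pair $(R^z_i,\sigma^z_i)$ with $R^z_i$ a positive integer (a half-side) and $\sigma^z_i\ge0$ (a height); these pairs are i.i.d. over $(z,i)$ and independent of the $M$'s. Let $R^{z,\max}=\max_{i\le M^z}R^z_i$ (with $R^{z,\max}=0$ if $M^z=0$) and $\sigma^{z,\mathrm{sum}}=\sum_{i=1}^{M^z}\sigma^z_i$. If $M^z\ge1$ there is a ball at $z$, namely $B^z=\{u\in\mathbb Z^d:\|u-z\|_\infty\le R^{z,\max}\}$; otherwise there is no ball at $z$. Two balls are connected if they intersect. The clump $\widehat C^z$ of $z$ is empty if no ball covers $z$; otherwise it is the largest union of connected balls containing a ball that covers $z$ (i.e. the union of the balls in the connected component of such a ball). The clump height is $\widehat\sigma^z=\sum_{u\in\widehat C^z}\sigma^{u,\mathrm{sum}}$ ($=0$ if $\widehat C^z=\emptyset$). $\lambda_c$ denotes the critical value of $\lambda$ below which every clump is a.s. finite and the number of lattice points in a clump has a finite exponential moment. *)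

theory Defs
  imports "HOL-Probability.Probability"
begin

text \<open>Lattice points of Z^d are vectors int^'d (d = CARD('d), an arbitrary finite index type).
A configuration assigns to each site z the pair (sigma^{z,sum}, R^{z,max}) :: real \<times> nat,
with R^{z,max} = 0 iff no item arrived at z (all half-sides R_i are positive integers).\<close>

type_synonym 'd config = "int ^ 'd \<Rightarrow> real \<times> nat"

definition has_ball :: "'d::finite config \<Rightarrow> int ^ 'd \<Rightarrow> bool" where
  "has_ball F z \<longleftrightarrow> snd (F z) > 0"

definition ball_at :: "'d::finite config \<Rightarrow> int ^ 'd \<Rightarrow> (int ^ 'd) set" where
  "ball_at F z = {u. \<forall>i. \<bar>u $ i - z $ i\<bar> \<le> int (snd (F z))}"

definition ball_adj :: "'d::finite config \<Rightarrow> ((int ^ 'd) \<times> (int ^ 'd)) set" where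
  "ball_adj F = {(z, w). has_ball F z \<and> has_ball F w \<and> ball_at F z \<inter> ball_at F w \<noteq> {}}"

definition clump :: "'d::finite config \<Rightarrow> int ^ 'd \<Rightarrow> (int ^ 'd) set" where
  "clump F x = (\<Union>{ball_at F w | z w. has_ball F z \<and> x \<in> ball_at F z \<and> (z, w) \<in> (ball_adj F)\<^sup>*})"

text \<open>Clump height: sum of sigma^{u,sum} over lattice points u of the clump
(Isabelle's finite sum; clumps are a.s. finite in the subcritical regime).\<close>
definition clump_height :: "'d::finite config \<Rightarrow> int ^ 'd \<Rightarrow> real" where
  "clump_height F x = (\<Sum>u\<in>clump F x. fst (F u))"

text \<open>Measurable space for (clump, height): sets of lattice points carry the sigma-algebra
generated by the evaluation events {A. z \<in> A}; heights carry the Borel sigma-algebra.\<close>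
definition point_sets_space :: "(int ^ 'd::finite) set measure" where
  "point_sets_space = sigma UNIV {{A. z \<in> A} | z. True}"

definition clump_space :: "((int ^ 'd::finite) set \<times> real) measure" where
  "clump_space = point_sets_space \<Otimes>\<^sub>M borel"

text \<open>Law of (sigma^{sum}, R^{max}) at one site: M ~ Poisson(lam), then M i.i.d. items (R_i, sigma_i)
with law nu; sigma^{sum} = sum of sigma_i, R^{max} = max of R_i (0 if M = 0).\<close>
definition site_law :: "real \<Rightarrow> (nat \<times> real) measure \<Rightarrow> (real \<times> nat) measure" where
  "site_law lam nu =
     measure_pmf (poisson_pmf lam) \<bind>
       (\<lambda>n. distr (PiM {..<n} (\<lambda>_. nu)) borel
              (\<lambda>\<omega>. ((\<Sum>i<n. snd (\<omega> i)), Max (insert 0 ((\<lambda>i. fst (\<omega> i)) ` {..<n})))))"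

definition canonical_model :: "'d::finite itself \<Rightarrow> real \<Rightarrow> (nat \<times> real) measure \<Rightarrow> 'd config measure" where
  "canonical_model _ lam nu = PiM UNIV (\<lambda>_. site_law lam nu)"

text \<open>Subcritical behaviour at intensity lam: every clump a.s. finite and the number of lattice
points of a clump (that of the origin, by translation invariance) has a finite exponential moment.\<close>
definition subcritical :: "'d::finite itself \<Rightarrow> real \<Rightarrow> (nat \<times> real) measure \<Rightarrow> bool" where
  "subcritical t lam nu \<longleftrightarrow>
     (AE F in canonical_model t lam nu. \<forall>z. finite (clump F z)) \<and>
     (\<exists>\<theta>>0. (\<integral>\<^sup>+ F. ennreal (exp (\<theta> * real (card (clump F (0::int^'d))))) \<partial>canonical_model t lam nu) < \<infinity>)"

definition lambda_c :: "'d::finite itself \<Rightarrow> (nat \<times> real) measure \<Rightarrow> ereal" where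
  "lambda_c t nu = Sup {ereal l0 | l0. 0 < l0 \<and> (\<forall>l. 0 < l \<and> l < l0 \<longrightarrow> subcritical t l nu)}"

end

theory Submission
  imports Defs
begin

lemma snd_comp_meas[measurable]:
  "(\<lambda>F::int^'d::finite \<Rightarrow> real \<times> nat. snd (F z)) \<in> measurable (PiM UNIV (\<lambda>_. borel)) (count_space UNIV)"
proof -
  have "(\<lambda>F::int^'d::finite \<Rightarrow> real \<times> nat. F z) \<in> measurable (PiM UNIV (\<lambda>_. borel)) borel" by simp
  moreover have "(snd :: real \<times> nat \<Rightarrow> nat) \<in> measurable borel borel"
    by (intro borel_measurable_continuous_onI continuous_intros)
  ultimately have "(\<lambda>F::int^'d::finite \<Rightarrow> real \<times> nat. snd (F z)) \<in> measurable (PiM UNIV (\<lambda>_. borel)) borel"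
    by (rule measurable_compose)
  then show ?thesis by (subst measurable_cong_sets[OF refl sets_borel_eq_count_space[symmetric]])
qed

lemma fst_comp_meas[measurable]:
  "(\<lambda>F::int^'d::finite \<Rightarrow> real \<times> nat. fst (F z)) \<in> borel_measurable (PiM UNIV (\<lambda>_. borel))"
proof -
  have "(\<lambda>F::int^'d::finite \<Rightarrow> real \<times> nat. F z) \<in> measurable (PiM UNIV (\<lambda>_. borel)) borel" by simp
  moreover have "(fst :: real \<times> nat \<Rightarrow> real) \<in> measurable borel borel"
    by (intro borel_measurable_continuous_onI continuous_intros)
  ultimately show ?thesis
    by (rule measurable_compose)
qed

definition bl :: "int^'d::finite \<Rightarrow> nat \<Rightarrow> (int^'d) set" where
  "bl z r = {u. \<forall>i. \<bar>u $ i - z $ i\<bar> \<le> int r}"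

lemma ball_at_bl: "ball_at F z = bl z (snd (F z))"
  by (simp add: ball_at_def bl_def)

lemma center_in_bl: "z \<in> bl z r"
  by (simp add: bl_def)

lemma bl_mono: "r \<le> r' \<Longrightarrow> bl z r \<subseteq> bl z r'"
  by (auto simp: bl_def) (meson of_nat_le_iff order_trans)

lemma adj_iff: "(z, w) \<in> ball_adj F \<longleftrightarrow>
  0 < snd (F z) \<and> 0 < snd (F w) \<and> bl z (snd (F z)) \<inter> bl w (snd (F w)) \<noteq> {}"
  by (simp add: ball_adj_def has_ball_def ball_at_bl)

lemma pred_relpow:
  "Measurable.pred (PiM UNIV (\<lambda>_. borel)) (\<lambda>F::int^'d::finite \<Rightarrow> real \<times> nat. (z, w) \<in> (ball_adj F) ^^ n)"
proof (induction n arbitrary: w)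
  case 0
  then show ?case by simp
next
  case (Suc n)
  have eq: "(\<lambda>F::int^'d::finite \<Rightarrow> real \<times> nat. (z, w) \<in> (ball_adj F) ^^ Suc n) =
     (\<lambda>F. \<exists>v. (z, v) \<in> (ball_adj F) ^^ n \<and>
        (0 < snd (F v) \<and> 0 < snd (F w) \<and> bl v (snd (F v)) \<inter> bl w (snd (F w)) \<noteq> {}))"
    by (auto simp: relpow.simps adj_iff[symmetric])
  show ?case unfolding eq using Suc by measurable
qed

lemma pred_rtrancl:
  "Measurable.pred (PiM UNIV (\<lambda>_. borel)) (\<lambda>F::int^'d::finite \<Rightarrow> real \<times> nat. (z, w) \<in> (ball_adj F)\<^sup>*)"
proof -
  have eq: "(\<lambda>F::int^'d::finite \<Rightarrow> real \<times> nat. (z, w) \<in> (ball_adj F)\<^sup>*) = (\<lambda>F. \<exists>n. (z, w) \<in> (ball_adj F) ^^ n)"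
    by (auto simp: rtrancl_power)
  show ?thesis unfolding eq using pred_relpow by measurable
qed

definition XC :: "'d::finite config \<Rightarrow> int^'d \<Rightarrow> int^'d \<Rightarrow> bool" where
  "XC F x v \<longleftrightarrow> (\<exists>z. has_ball F z \<and> x \<in> ball_at F z \<and> (z, v) \<in> (ball_adj F)\<^sup>*)"

lemma clump_XC: "clump F x = \<Union>{ball_at F w | w. XC F x w}"
  unfolding clump_def XC_def by blast

lemma mem_clump_iff: "u \<in> clump F x \<longleftrightarrow> (\<exists>z w. 0 < snd (F z) \<and> x \<in> bl z (snd (F z)) \<and>
   (z, w) \<in> (ball_adj F)\<^sup>* \<and> u \<in> bl w (snd (F w)))"
  unfolding clump_def by (auto simp: has_ball_def ball_at_bl)

lemma pred_mem_clump[measurable]: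
  "Measurable.pred (PiM UNIV (\<lambda>_. borel)) (\<lambda>F::int^'d::finite \<Rightarrow> real \<times> nat. u \<in> clump F x)"
  unfolding mem_clump_iff using pred_rtrancl by measurable

lemma clump_meas:
  "(\<lambda>F::int^'d::finite \<Rightarrow> real \<times> nat. clump F x) \<in> measurable (PiM UNIV (\<lambda>_. borel)) point_sets_space"
  unfolding point_sets_space_def
proof (rule measurable_measure_of)
  fix Y :: "(int^'d) set set" assume "Y \<in> {{A. z \<in> A} |z. True}"
  then obtain z where Y: "Y = {A. z \<in> A}" by auto
  have "(\<lambda>F::int^'d::finite \<Rightarrow> real \<times> nat. clump F x) -` Y \<inter> space (PiM UNIV (\<lambda>_. borel)) =
       {F \<in> space (PiM UNIV (\<lambda>_. borel)). z \<in> clump F x}" by (auto simp: Y)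
  also have "\<dots> \<in> sets (PiM UNIV (\<lambda>_. borel))" by measurable
  finally show "(\<lambda>F::int^'d::finite \<Rightarrow> real \<times> nat. clump F x) -` Y \<inter> space (PiM UNIV (\<lambda>_. borel)) \<in> sets (PiM UNIV (\<lambda>_. borel))" .
qed auto

lemma clump_eq_sets[measurable]:
  "{F::int^'d::finite \<Rightarrow> real \<times> nat. clump F x = A} \<in> sets (PiM UNIV (\<lambda>_. borel))"
proof -
  have "{F::int^'d::finite \<Rightarrow> real \<times> nat. clump F x = A} = {F \<in> space (PiM UNIV (\<lambda>_. borel)). \<forall>u. u \<in> clump F x \<longleftrightarrow> u \<in> A}"
    by (auto simp: space_PiM)
  also have "\<dots> \<in> sets (PiM UNIV (\<lambda>_. borel))" by measurable
  finally show ?thesis .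
qed

lemma clump_finite_sets[measurable]:
  "{F::int^'d::finite \<Rightarrow> real \<times> nat. finite (clump F x)} \<in> sets (PiM UNIV (\<lambda>_. borel))"
proof -
  have "{F::int^'d::finite \<Rightarrow> real \<times> nat. finite (clump F x)} = (\<Union>A\<in>Collect finite. {F. clump F x = A})"
    by auto
  also have "\<dots> \<in> sets (PiM UNIV (\<lambda>_. borel))"
    by (intro sets.countable_UN'' countable_Collect_finite) (auto intro: clump_eq_sets)
  finally show ?thesis .
qed

definition zeta :: "('i \<Rightarrow> 'v) \<times> ('i \<Rightarrow> 'v) \<Rightarrow> 'i \<Rightarrow> 'v \<times> 'v" where
  "zeta p = (\<lambda>i. (fst p i, snd p i))"

lemma emb_UNIV_eq:
  assumes "space S = UNIV"
  shows "prod_emb UNIV (\<lambda>_. S) j (Pi\<^sub>E j a) = {f. \<forall>i\<in>j. f i \<in> a i}"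
  using assms by (auto simp: prod_emb_def PiE_def Pi_def extensional_def)

lemma space_PiM_UNIV: "space S = UNIV \<Longrightarrow> space (PiM UNIV (\<lambda>_. S)) = UNIV"
  by (simp add: space_PiM)

lemma zeta_distr:
  fixes S :: "'v measure"
  assumes S: "prob_space S" and sp: "space S = UNIV"
  shows "distr (PiM (UNIV::'i set) (\<lambda>_. S) \<Otimes>\<^sub>M PiM UNIV (\<lambda>_. S)) (PiM UNIV (\<lambda>_. S \<Otimes>\<^sub>M S)) zeta
     = PiM UNIV (\<lambda>_. S \<Otimes>\<^sub>M S)"
proof -
  let ?Q = "PiM (UNIV::'i set) (\<lambda>_. S)"
  let ?P2 = "PiM (UNIV::'i set) (\<lambda>_. S \<Otimes>\<^sub>M S)"
  let ?E = "{a \<times> b | a b. a \<in> sets S \<and> b \<in> sets S}"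
  let ?\<Omega> = "(UNIV :: ('v \<times> 'v) set)"
  let ?P = "{{f\<in>(\<Pi>\<^sub>E i\<in>(UNIV::'i set). ?\<Omega>). \<forall>i\<in>j. f i \<in> A i} | A j. j \<in> {j. finite j} \<and> A \<in> Pi j (\<lambda>_. ?E)}"
  interpret S: prob_space S by fact
  interpret Q: prob_space ?Q by (intro prob_space_PiM S)
  interpret P2: prob_space ?P2 by (intro prob_space_PiM prob_space_pair S)
  interpret QQ: pair_prob_space ?Q ?Q ..
  have spE: "?E \<subseteq> Pow ?\<Omega>" by auto
  have sSS: "sets (S \<Otimes>\<^sub>M S) = sets (sigma ?\<Omega> ?E)"
    using sp by (simp add: sets_pair_measure sets_measure_of[OF spE])
  have sP2: "sets ?P2 = sets (sigma (\<Pi>\<^sub>E i\<in>(UNIV::'i set). ?\<Omega>) ?P)"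
  proof -
    have "sets ?P2 = sets (PiM (UNIV::'i set) (\<lambda>_. sigma ?\<Omega> ?E))"
      using sSS by (intro sets_PiM_cong) auto
    also have "\<dots> = sets (sigma (\<Pi>\<^sub>E i\<in>(UNIV::'i set). ?\<Omega>) ?P)"
    proof (rule sets_PiM_sigma)
      have UE: "(UNIV::('v\<times>'v) set) \<in> ?E" using sp by (intro CollectI exI[of _ UNIV]) (metis sets.top[of S] UNIV_Times_UNIV)
      show "\<exists>S'\<subseteq>?E. countable S' \<and> ?\<Omega> = \<Union>S'" for i
        using UE by (intro exI[of _ "{UNIV}"]) auto
    qed auto
    finally show ?thesis .
  qed
  have PiE_U: "(\<Pi>\<^sub>E i\<in>(UNIV::'i set). ?\<Omega>) = UNIV" by auto
  have spP: "?P \<subseteq> Pow (UNIV)" by auto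
  have sP: "sets (sigma (\<Pi>\<^sub>E i\<in>(UNIV::'i set). ?\<Omega>) ?P) = sigma_sets UNIV ?P"
    unfolding PiE_U by (rule sets_measure_of) auto
  show ?thesis
  proof (rule measure_eqI_generator_eq[where E="?P" and \<Omega>=UNIV and A="\<lambda>_. UNIV"])
    show "Int_stable ?P"
    proof (rule Int_stableI)
      fix X Y assume "X \<in> ?P" "Y \<in> ?P"
      then obtain A1 j1 A2 j2 where X: "X = {f. \<forall>i\<in>j1. f i \<in> A1 i}" "finite j1" "A1 \<in> Pi j1 (\<lambda>_. ?E)"
        and Y: "Y = {f. \<forall>i\<in>j2. f i \<in> A2 i}" "finite j2" "A2 \<in> Pi j2 (\<lambda>_. ?E)"
        by auto
      define A where "A i = (if i \<in> j1 then A1 i else UNIV) \<inter> (if i \<in> j2 then A2 i else UNIV)" for i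
      have "A \<in> Pi (j1 \<union> j2) (\<lambda>_. ?E)"
      proof
        fix i assume "i \<in> j1 \<union> j2"
        have UE: "(UNIV::('v\<times>'v) set) \<in> ?E" using sp by (intro CollectI exI[of _ UNIV]) (metis sets.top[of S] UNIV_Times_UNIV)
        have c1: "(if i \<in> j1 then A1 i else UNIV) \<in> ?E" using X(3) UE by auto
        have c2: "(if i \<in> j2 then A2 i else UNIV) \<in> ?E" using Y(3) UE by auto
        from c1 obtain a1 b1 where e1: "(if i \<in> j1 then A1 i else UNIV) = a1 \<times> b1" "a1 \<in> sets S" "b1 \<in> sets S" by blast
        from c2 obtain a2 b2 where e2: "(if i \<in> j2 then A2 i else UNIV) = a2 \<times> b2" "a2 \<in> sets S" "b2 \<in> sets S" by blast
        have "A i = (a1 \<inter> a2) \<times> (b1 \<inter> b2)" unfolding A_def e1(1) e2(1) by auto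
        then show "A i \<in> ?E" using e1 e2 by blast
      qed
      moreover have "X \<inter> Y = {f. \<forall>i\<in>j1 \<union> j2. f i \<in> A i}"
        by (auto simp: X Y A_def)
      ultimately show "X \<inter> Y \<in> ?P" using X(2) Y(2)
        by (intro CollectI exI[of _ A] exI[of _ "j1 \<union> j2"]) auto
    qed
  next
    show "?P \<subseteq> Pow UNIV" by auto
  next
    show "sets (distr (?Q \<Otimes>\<^sub>M ?Q) ?P2 zeta) = sigma_sets UNIV ?P"
      using sP2 sP by simp
  next
    show "sets ?P2 = sigma_sets UNIV ?P" using sP2 sP by simp
  next
    show "range (\<lambda>_. UNIV) \<subseteq> ?P"
      by (auto intro!: exI[of _ "{}"])
  next
    show "(\<Union>i::nat. UNIV) = UNIV" by simp
  next
    show "emeasure (distr (?Q \<Otimes>\<^sub>M ?Q) ?P2 zeta) UNIV \<noteq> \<infinity>"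
    proof -
      have zmeas: "zeta \<in> measurable (?Q \<Otimes>\<^sub>M ?Q) ?P2"
        unfolding zeta_def
        by (rule measurable_PiM_single') (auto simp: space_pair_measure space_PiM sp)
      have "prob_space (?Q \<Otimes>\<^sub>M ?Q)" by (intro prob_space_pair Q.prob_space_axioms)
      then interpret D: prob_space "distr (?Q \<Otimes>\<^sub>M ?Q) ?P2 zeta" by (rule prob_space.prob_space_distr[OF _ zmeas])
      show ?thesis using D.emeasure_finite by (simp add: top_ennreal.rep_eq)
    qed
  next
    have zmeas: "zeta \<in> measurable (?Q \<Otimes>\<^sub>M ?Q) ?P2"
      unfolding zeta_def
        by (rule measurable_PiM_single') (auto simp: space_pair_measure space_PiM sp)
    fix X assume "X \<in> ?P"
    then obtain A j where X: "X = {f. \<forall>i\<in>j. f i \<in> A i}" "finite j" "A \<in> Pi j (\<lambda>_. ?E)"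
      by auto
    have "\<forall>i\<in>j. \<exists>a b. A i = a \<times> b \<and> a \<in> sets S \<and> b \<in> sets S" using X(3) by auto
    then obtain a where "\<forall>i\<in>j. \<exists>b. A i = a i \<times> b \<and> a i \<in> sets S \<and> b \<in> sets S" by metis
    then obtain b where ab: "\<And>i. i \<in> j \<Longrightarrow> A i = a i \<times> b i \<and> a i \<in> sets S \<and> b i \<in> sets S" by metis
    have Xe: "X = {f. \<forall>i\<in>j. f i \<in> a i \<times> b i}" using ab X(1) by auto
    have Xs: "X \<in> sets ?P2"
    proof -
      have "X = prod_emb UNIV (\<lambda>_. S \<Otimes>\<^sub>M S) j (Pi\<^sub>E j (\<lambda>i. a i \<times> b i))"
        unfolding Xe by (rule emb_UNIV_eq[symmetric]) (simp add: space_pair_measure sp)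
      also have "\<dots> \<in> sets ?P2" using ab X(2) by (intro sets_PiM_I) auto
      finally show ?thesis .
    qed
    have pre: "zeta -` X \<inter> space (?Q \<Otimes>\<^sub>M ?Q) =
        prod_emb UNIV (\<lambda>_. S) j (Pi\<^sub>E j a) \<times> prod_emb UNIV (\<lambda>_. S) j (Pi\<^sub>E j b)"
      unfolding emb_UNIV_eq[OF sp] Xe by (auto simp: zeta_def space_pair_measure space_PiM sp)
    have "emeasure (distr (?Q \<Otimes>\<^sub>M ?Q) ?P2 zeta) X =
          emeasure (?Q \<Otimes>\<^sub>M ?Q) (prod_emb UNIV (\<lambda>_. S) j (Pi\<^sub>E j a) \<times> prod_emb UNIV (\<lambda>_. S) j (Pi\<^sub>E j b))"
      by (subst emeasure_distr[OF zmeas Xs]) (simp add: pre)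
    also have "\<dots> = emeasure ?Q (prod_emb UNIV (\<lambda>_. S) j (Pi\<^sub>E j a)) * emeasure ?Q (prod_emb UNIV (\<lambda>_. S) j (Pi\<^sub>E j b))"
      using ab X(2) by (intro Q.emeasure_pair_measure_Times sets_PiM_I) auto
    also have "\<dots> = (\<Prod>i\<in>j. emeasure S (a i)) * (\<Prod>i\<in>j. emeasure S (b i))"
      using ab X(2) S by (simp add: emeasure_PiM_emb)
    also have "\<dots> = (\<Prod>i\<in>j. emeasure (S \<Otimes>\<^sub>M S) (a i \<times> b i))"
      using ab by (simp add: prod.distrib S.emeasure_pair_measure_Times)
    also have "\<dots> = emeasure ?P2 (prod_emb UNIV (\<lambda>_. S \<Otimes>\<^sub>M S) j (Pi\<^sub>E j (\<lambda>i. a i \<times> b i)))"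
      using ab X(2) S by (subst emeasure_PiM_emb) (auto intro: prob_space_pair)
    also have "prod_emb UNIV (\<lambda>_. S \<Otimes>\<^sub>M S) j (Pi\<^sub>E j (\<lambda>i. a i \<times> b i)) = X"
      unfolding Xe by (rule emb_UNIV_eq) (simp add: space_pair_measure sp)
    finally show "emeasure (distr (?Q \<Otimes>\<^sub>M ?Q) ?P2 zeta) X = emeasure ?P2 X" .
  qed
qed

definition tau :: "'v set \<Rightarrow> 'v \<times> 'v \<Rightarrow> 'v \<times> 'v" where
  "tau m p = (if p \<in> (-m) \<times> (-m) then (snd p, fst p) else p)"

lemma tau_meas:
  assumes "m \<in> sets S" "space S = UNIV"
  shows "tau m \<in> measurable (S \<Otimes>\<^sub>M S) (S \<Otimes>\<^sub>M S)"
proof -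
  have "(-m) \<times> (-m) \<in> sets (S \<Otimes>\<^sub>M S)"
    using assms by (metis Compl_eq_Diff_UNIV pair_measureI sets.compl_sets)
  then show ?thesis unfolding tau_def
    by (intro measurable_If_set) (auto simp: space_pair_measure assms intro: measurable_Pair)
qed

lemma tau_distr:
  assumes S: "prob_space S" and m: "m \<in> sets S" and sp: "space S = UNIV"
  shows "distr (S \<Otimes>\<^sub>M S) (S \<Otimes>\<^sub>M S) (tau m) = S \<Otimes>\<^sub>M S"
proof (rule measure_eqI)
  interpret S: prob_space S by fact
  interpret SS: pair_prob_space S S ..
  let ?U = "(-m) \<times> (-m)"
  have U: "?U \<in> sets (S \<Otimes>\<^sub>M S)"
    using m sp by (metis Compl_eq_Diff_UNIV pair_measureI sets.compl_sets)
  have sw: "(\<lambda>(x, y). (y, x)) \<in> measurable (S \<Otimes>\<^sub>M S) (S \<Otimes>\<^sub>M S)" by measurable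
  fix B assume "B \<in> sets (distr (S \<Otimes>\<^sub>M S) (S \<Otimes>\<^sub>M S) (tau m))"
  then have B: "B \<in> sets (S \<Otimes>\<^sub>M S)" by simp
  have sp2: "space (S \<Otimes>\<^sub>M S) = UNIV" by (simp add: space_pair_measure sp)
  have pre: "tau m -` B \<inter> space (S \<Otimes>\<^sub>M S) = (B - ?U) \<union> ((\<lambda>(x, y). (y, x)) -` (B \<inter> ?U) \<inter> space (S \<Otimes>\<^sub>M S))"
    by (auto simp: tau_def sp2 split: if_splits)
  have swB: "(\<lambda>(x, y). (y, x)) -` (B \<inter> ?U) \<inter> space (S \<Otimes>\<^sub>M S) \<in> sets (S \<Otimes>\<^sub>M S)"
    using B U sw by (intro measurable_sets[OF sw]) auto
  have "emeasure (distr (S \<Otimes>\<^sub>M S) (S \<Otimes>\<^sub>M S) (tau m)) B = emeasure (S \<Otimes>\<^sub>M S) (tau m -` B \<inter> space (S \<Otimes>\<^sub>M S))"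
    by (rule emeasure_distr[OF tau_meas[OF m sp] B])
  also have "\<dots> = emeasure (S \<Otimes>\<^sub>M S) (B - ?U) + emeasure (S \<Otimes>\<^sub>M S) ((\<lambda>(x, y). (y, x)) -` (B \<inter> ?U) \<inter> space (S \<Otimes>\<^sub>M S))"
    unfolding pre using B U swB by (intro plus_emeasure[symmetric]) (auto simp: sp2)
  also have "emeasure (S \<Otimes>\<^sub>M S) ((\<lambda>(x, y). (y, x)) -` (B \<inter> ?U) \<inter> space (S \<Otimes>\<^sub>M S)) =
     emeasure (distr (S \<Otimes>\<^sub>M S) (S \<Otimes>\<^sub>M S) (\<lambda>(x, y). (y, x))) (B \<inter> ?U)"
    using B U by (intro emeasure_distr[symmetric] sw) auto
  also have "distr (S \<Otimes>\<^sub>M S) (S \<Otimes>\<^sub>M S) (\<lambda>(x, y). (y, x)) = S \<Otimes>\<^sub>M S"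
    by (rule SS.distr_pair_swap[symmetric])
  also have "emeasure (S \<Otimes>\<^sub>M S) (B - ?U) + emeasure (S \<Otimes>\<^sub>M S) (B \<inter> ?U) = emeasure (S \<Otimes>\<^sub>M S) B"
    using B U by (subst plus_emeasure) (auto intro!: arg_cong[where f="emeasure (S \<Otimes>\<^sub>M S)"])
  finally show "emeasure (distr (S \<Otimes>\<^sub>M S) (S \<Otimes>\<^sub>M S) (tau m)) B = emeasure (S \<Otimes>\<^sub>M S) B" .
qed simp

lemma PiTau_distr:
  fixes S :: "'v measure" and mf :: "'i \<Rightarrow> 'v set"
  assumes S: "prob_space S" and m: "\<And>i. mf i \<in> sets S" and sp: "space S = UNIV"
  shows "distr (PiM (UNIV::'i set) (\<lambda>_. S \<Otimes>\<^sub>M S)) (PiM UNIV (\<lambda>_. S \<Otimes>\<^sub>M S)) (\<lambda>G i. tau (mf i) (G i))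
     = PiM UNIV (\<lambda>_. S \<Otimes>\<^sub>M S)"
proof -
  let ?P2 = "PiM (UNIV::'i set) (\<lambda>_. S \<Otimes>\<^sub>M S)"
  interpret S: prob_space S by fact
  interpret SS: pair_prob_space S S ..
  interpret PP: product_prob_space "\<lambda>_. S \<Otimes>\<^sub>M S" "UNIV::'i set"
    by unfold_locales
  have sp2: "space (S \<Otimes>\<^sub>M S) = UNIV" by (simp add: space_pair_measure sp)
  have Tm: "(\<lambda>G i. tau (mf i) (G i)) \<in> measurable ?P2 ?P2"
    by (rule measurable_PiM_single') (auto intro: measurable_compose[OF _ tau_meas[OF m sp]] simp: space_PiM sp2)
  show ?thesis
  proof (rule PP.PiM_eq)
    fix J F assume J: "finite J" "J \<subseteq> (UNIV::'i set)" and F: "\<And>j. j \<in> J \<Longrightarrow> F j \<in> sets (S \<Otimes>\<^sub>M S)"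
    have pre: "(\<lambda>G i. tau (mf i) (G i)) -` prod_emb UNIV (\<lambda>_. S \<Otimes>\<^sub>M S) J (Pi\<^sub>E J F) \<inter> space ?P2
       = prod_emb UNIV (\<lambda>_. S \<Otimes>\<^sub>M S) J (Pi\<^sub>E J (\<lambda>j. tau (mf j) -` F j))"
      by (simp add: emb_UNIV_eq sp2 space_PiM_UNIV) 
    have Fs: "tau (mf j) -` F j \<in> sets (S \<Otimes>\<^sub>M S)" if "j \<in> J" for j
      using measurable_sets[OF tau_meas[OF m sp] F[OF that]] by (simp add: sp2)
    have "emeasure (distr ?P2 ?P2 (\<lambda>G i. tau (mf i) (G i))) (prod_emb UNIV (\<lambda>_. S \<Otimes>\<^sub>M S) J (Pi\<^sub>E J F))
        = emeasure ?P2 (prod_emb UNIV (\<lambda>_. S \<Otimes>\<^sub>M S) J (Pi\<^sub>E J (\<lambda>j. tau (mf j) -` F j)))"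
      using F J by (subst emeasure_distr[OF Tm]) (auto simp: pre intro!: sets_PiM_I)
    also have "\<dots> = (\<Prod>j\<in>J. emeasure (S \<Otimes>\<^sub>M S) (tau (mf j) -` F j))"
      using J Fs by (intro PP.emeasure_PiM_emb) auto
    also have "\<dots> = (\<Prod>j\<in>J. emeasure (S \<Otimes>\<^sub>M S) (F j))"
    proof (rule prod.cong[OF refl])
      fix j assume j: "j \<in> J"
      have "emeasure (S \<Otimes>\<^sub>M S) (tau (mf j) -` F j) = emeasure (distr (S \<Otimes>\<^sub>M S) (S \<Otimes>\<^sub>M S) (tau (mf j))) (F j)"
        using F[OF j] by (subst emeasure_distr[OF tau_meas[OF m sp]]) (auto simp: sp2)
      also have "\<dots> = emeasure (S \<Otimes>\<^sub>M S) (F j)" by (simp add: tau_distr[OF S m sp])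
      finally show "emeasure (S \<Otimes>\<^sub>M S) (tau (mf j) -` F j) = emeasure (S \<Otimes>\<^sub>M S) (F j)" .
    qed
    finally show "emeasure (distr ?P2 ?P2 (\<lambda>G i. tau (mf i) (G i))) (prod_emb UNIV (\<lambda>_. S \<Otimes>\<^sub>M S) J (Pi\<^sub>E J F))
       = (\<Prod>j\<in>J. emeasure (S \<Otimes>\<^sub>M S) (F j))" .
  qed simp
qed

definition zinv :: "('i \<Rightarrow> 'v \<times> 'v) \<Rightarrow> ('i \<Rightarrow> 'v) \<times> ('i \<Rightarrow> 'v)" where
  "zinv G = (\<lambda>i. fst (G i), \<lambda>i. snd (G i))"

definition Tf :: "('i \<Rightarrow> 'v set) \<Rightarrow> ('i \<Rightarrow> 'v) \<times> ('i \<Rightarrow> 'v) \<Rightarrow> ('i \<Rightarrow> 'v) \<times> ('i \<Rightarrow> 'v)" where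
  "Tf mf p = zinv (\<lambda>i. tau (mf i) (zeta p i))"

lemma zeta_meas:
  assumes sp: "space S = UNIV"
  shows "zeta \<in> measurable (PiM (UNIV::'i set) (\<lambda>_. S) \<Otimes>\<^sub>M PiM UNIV (\<lambda>_. S)) (PiM UNIV (\<lambda>_. S \<Otimes>\<^sub>M S))"
  unfolding zeta_def
  by (rule measurable_PiM_single') (auto simp: space_pair_measure space_PiM sp)

lemma zinv_meas:
  assumes sp: "space S = UNIV"
  shows "zinv \<in> measurable (PiM UNIV (\<lambda>_. S \<Otimes>\<^sub>M S)) (PiM (UNIV::'i set) (\<lambda>_. S) \<Otimes>\<^sub>M PiM UNIV (\<lambda>_. S))"
  unfolding zinv_def
proof (rule measurable_Pair)
  show "(\<lambda>x. \<lambda>i. fst (x i)) \<in> PiM UNIV (\<lambda>_. S \<Otimes>\<^sub>M S) \<rightarrow>\<^sub>M PiM (UNIV::'i set) (\<lambda>_. S)"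
    by (rule measurable_PiM_single') (auto simp: space_pair_measure space_PiM sp)
  show "(\<lambda>x. \<lambda>i. snd (x i)) \<in> PiM UNIV (\<lambda>_. S \<Otimes>\<^sub>M S) \<rightarrow>\<^sub>M PiM (UNIV::'i set) (\<lambda>_. S)"
    by (rule measurable_PiM_single') (auto simp: space_pair_measure space_PiM sp)
qed

lemma PiTau_meas:
  assumes m: "\<And>i. mf i \<in> sets S" and sp: "space S = UNIV"
  shows "(\<lambda>G i. tau (mf i) (G i)) \<in> measurable (PiM (UNIV::'i set) (\<lambda>_. S \<Otimes>\<^sub>M S)) (PiM UNIV (\<lambda>_. S \<Otimes>\<^sub>M S))"
proof -
  have sp2: "space (S \<Otimes>\<^sub>M S) = UNIV" by (simp add: space_pair_measure sp)
  show ?thesis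
    by (rule measurable_PiM_single') (auto intro: measurable_compose[OF _ tau_meas[OF m sp]] simp: space_PiM sp2)
qed

lemma Tf_distr:
  fixes S :: "'v measure" and mf :: "'i \<Rightarrow> 'v set"
  assumes S: "prob_space S" and m: "\<And>i. mf i \<in> sets S" and sp: "space S = UNIV"
  shows "distr (PiM (UNIV::'i set) (\<lambda>_. S) \<Otimes>\<^sub>M PiM UNIV (\<lambda>_. S)) (PiM (UNIV::'i set) (\<lambda>_. S) \<Otimes>\<^sub>M PiM UNIV (\<lambda>_. S)) (Tf mf)
    = PiM (UNIV::'i set) (\<lambda>_. S) \<Otimes>\<^sub>M PiM UNIV (\<lambda>_. S)"
proof -
  let ?Q = "PiM (UNIV::'i set) (\<lambda>_. S)"
  let ?QQ = "?Q \<Otimes>\<^sub>M ?Q"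
  let ?P2 = "PiM (UNIV::'i set) (\<lambda>_. S \<Otimes>\<^sub>M S)"
  let ?Pt = "(\<lambda>G i. tau (mf i) (G i))"
  have eq: "Tf mf = zinv \<circ> (?Pt \<circ> zeta)"
    by (simp add: Tf_def fun_eq_iff)
  have "distr ?QQ ?QQ (Tf mf) = distr (distr (distr ?QQ ?P2 zeta) ?P2 ?Pt) ?QQ zinv"
    unfolding eq
    by (simp add: distr_distr zeta_meas[OF sp] zinv_meas[OF sp] PiTau_meas[OF m sp] measurable_comp[OF zeta_meas[OF sp] PiTau_meas[OF m sp]])
  also have "\<dots> = distr (distr ?QQ ?P2 zeta) ?QQ zinv"
    by (simp add: zeta_distr[OF S sp] PiTau_distr[OF S m sp])
  also have "\<dots> = distr ?QQ ?QQ (zinv \<circ> zeta)"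
    by (simp add: distr_distr zeta_meas[OF sp] zinv_meas[OF sp])
  also have "zinv \<circ> zeta = (\<lambda>x. x)"
    by (simp add: fun_eq_iff zinv_def zeta_def)
  finally show ?thesis by simp
qed

lemma core2:
  fixes S :: "'v measure" and mf :: "'i \<Rightarrow> 'v set"
  assumes S: "prob_space S" and m: "\<And>i. mf i \<in> sets S" and sp: "space S = UNIV"
    and E: "E \<in> sets (PiM (UNIV::'i set) (\<lambda>_. S))"
    and inv: "\<And>F G. F \<in> E \<Longrightarrow> (\<And>j. G j = F j \<or> (F j \<notin> mf j \<and> G j \<notin> mf j)) \<Longrightarrow> G \<in> E"
    and B: "B \<in> sets (PiM (UNIV::'i set) (\<lambda>_. S))"
  shows "emeasure (PiM (UNIV::'i set) (\<lambda>_. S) \<Otimes>\<^sub>M PiM UNIV (\<lambda>_. S))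
      {p. fst p \<in> E \<and> (\<lambda>i. if fst p i \<in> mf i \<or> snd p i \<in> mf i then snd p i else fst p i) \<in> B}
    = emeasure (PiM (UNIV::'i set) (\<lambda>_. S)) E * emeasure (PiM (UNIV::'i set) (\<lambda>_. S)) B"
proof -
  let ?Q = "PiM (UNIV::'i set) (\<lambda>_. S)"
  let ?QQ = "?Q \<Otimes>\<^sub>M ?Q"
  interpret Q: prob_space ?Q by (intro prob_space_PiM S)
  interpret QQ: pair_prob_space ?Q ?Q ..
  have Tm: "Tf mf \<in> measurable ?QQ ?QQ"
    unfolding Tf_def
    using measurable_comp[OF measurable_comp[OF zeta_meas[OF sp] PiTau_meas[OF m sp]] zinv_meas[OF sp]]
    by (simp add: comp_def)
  have spQQ: "space ?QQ = UNIV" by (simp add: space_pair_measure space_PiM_UNIV sp)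
  have fstT: "fst (Tf mf p) = (\<lambda>i. if fst p i \<notin> mf i \<and> snd p i \<notin> mf i then snd p i else fst p i)" for p
    by (auto simp: Tf_def zinv_def tau_def zeta_def fun_eq_iff)
  have sndT: "snd (Tf mf p) = (\<lambda>i. if fst p i \<in> mf i \<or> snd p i \<in> mf i then snd p i else fst p i)" for p
    by (auto simp: Tf_def zinv_def tau_def zeta_def fun_eq_iff)
  have fE: "fst (Tf mf p) \<in> E \<longleftrightarrow> fst p \<in> E" for p
  proof
    assume "fst (Tf mf p) \<in> E"
    then show "fst p \<in> E" by (rule inv) (auto simp: fstT)
  next
    assume "fst p \<in> E"
    then show "fst (Tf mf p) \<in> E" by (rule inv) (auto simp: fstT)
  qed
  have pre: "{p. fst p \<in> E \<and> (\<lambda>i. if fst p i \<in> mf i \<or> snd p i \<in> mf i then snd p i else fst p i) \<in> B}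
      = Tf mf -` (E \<times> B) \<inter> space ?QQ"
  proof (rule set_eqI)
    fix p
    show "p \<in> {p. fst p \<in> E \<and> (\<lambda>i. if fst p i \<in> mf i \<or> snd p i \<in> mf i then snd p i else fst p i) \<in> B} \<longleftrightarrow>
      p \<in> Tf mf -` (E \<times> B) \<inter> space ?QQ"
      using fE[of p] sndT[of p] by (simp add: spQQ mem_Times_iff)
  qed
  have "emeasure ?QQ (Tf mf -` (E \<times> B) \<inter> space ?QQ) = emeasure (distr ?QQ ?QQ (Tf mf)) (E \<times> B)"
    using E B by (intro emeasure_distr[symmetric] Tm) auto
  also have "\<dots> = emeasure ?QQ (E \<times> B)" by (simp add: Tf_distr[OF S m sp])
  also have "\<dots> = emeasure ?Q E * emeasure ?Q B"
    using E B by (intro Q.emeasure_pair_measure_Times)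
  finally show ?thesis by (simp add: pre)
qed

definition mA :: "(int^'d::finite) set \<Rightarrow> int^'d \<Rightarrow> int^'d \<Rightarrow> (real \<times> nat) set" where
  "mA A x j = {v. (0 < snd v \<and> bl j (snd v) \<inter> insert x A \<noteq> {}) \<or> (j \<in> A \<and> fst v \<noteq> 0)}"

lemma XC_trans: "XC F x v \<Longrightarrow> (v, w) \<in> (ball_adj F)\<^sup>* \<Longrightarrow> XC F x w"
  unfolding XC_def by (meson rtrancl_trans)

lemma XC_has_ball: "XC F x v \<Longrightarrow> has_ball F v"
  unfolding XC_def by (auto elim: rtranclE simp: ball_adj_def)

lemma XC_sub: "XC F x v \<Longrightarrow> ball_at F v \<subseteq> clump F x"
  unfolding clump_XC by blast

lemma L1:
  assumes "has_ball F v"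
  shows "ball_at F v \<inter> insert x (clump F x) = {} \<or> XC F x v"
proof (rule ccontr)
  assume "\<not> ?thesis"
  then have nx: "\<not> XC F x v" and ne: "ball_at F v \<inter> insert x (clump F x) \<noteq> {}" by auto
  show False
  proof (cases "x \<in> ball_at F v")
    case True
    then have "XC F x v" using assms unfolding XC_def by blast
    with nx show False by simp
  next
    case False
    with ne obtain u where u: "u \<in> ball_at F v" "u \<in> clump F x" by auto
    then obtain w where w: "XC F x w" "u \<in> ball_at F w" unfolding clump_XC by blast
    have "(w, v) \<in> ball_adj F" using w u assms XC_has_ball[OF w(1)] unfolding ball_adj_def by auto
    then have "XC F x v" using XC_trans[OF w(1)] by blast
    with nx show False by simp
  qed
qed

lemma inv_clump:
  assumes A: "clump F x = A"
    and G: "\<And>j. G j = F j \<or> (F j \<notin> mA A x j \<and> G j \<notin> mA A x j)"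
  shows "clump G x = A \<and> clump_height G x = clump_height F x"
proof -
  have Fm: "F j \<in> mA A x j \<Longrightarrow> G j = F j" for j using G[of j] by auto
  have Gm: "G j \<in> mA A x j \<Longrightarrow> G j = F j" for j using G[of j] by auto
  have h3: "has_ball H j \<Longrightarrow> ball_at H j \<inter> insert x A \<noteq> {} \<Longrightarrow> H j \<in> mA A x j" for H :: "'a config" and j
    by (auto simp: mA_def has_ball_def ball_at_bl)
  have adj_same: "(v, w) \<in> ball_adj F \<longleftrightarrow> (v, w) \<in> ball_adj G" if "G v = F v" "G w = F w" for v w
    using that by (simp add: adj_iff)
  have fwd: "(z, v) \<in> (ball_adj G)\<^sup>* \<and> G v = F v"
    if "(z, v) \<in> (ball_adj F)\<^sup>*" "has_ball F z" "x \<in> ball_at F z" for z v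
    using that(1)
  proof (induction rule: rtrancl_induct)
    case base
    show ?case using h3[of F z] that by (auto intro: Fm)
  next
    case (step v w)
    have xw: "XC F x w" unfolding XC_def using that step by (meson rtrancl.rtrancl_into_rtrancl)
    have "w \<in> ball_at F w" by (simp add: ball_at_bl center_in_bl)
    then have "ball_at F w \<inter> insert x A \<noteq> {}" using XC_sub[OF xw] A by auto
    then have Gw: "G w = F w" using h3[of F w] XC_has_ball[OF xw] Fm by blast
    then have "(v, w) \<in> ball_adj G" using adj_same[of v w] step by auto
    then show ?case using step Gw by auto
  qed
  have bwd: "(z, v) \<in> (ball_adj F)\<^sup>* \<and> G v = F v"
    if "(z, v) \<in> (ball_adj G)\<^sup>*" "has_ball G z" "x \<in> ball_at G z" for z v
    using that(1)
  proof (induction rule: rtrancl_induct)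
    case base
    show ?case using h3[of G z] that by (auto intro: Gm)
  next
    case (step v w)
    have Gz: "G z = F z" using h3[of G z] that by (auto intro: Gm)
    have xv: "XC F x v" unfolding XC_def using step that Gz
      by (intro exI[of _ z]) (auto simp: has_ball_def ball_at_bl)
    have "ball_at G v \<subseteq> A" using XC_sub[OF xv] A step by (simp add: ball_at_bl)
    moreover have "ball_at G w \<inter> ball_at G v \<noteq> {}" "has_ball G w" using step(2) by (auto simp: ball_adj_def)
    ultimately have "ball_at G w \<inter> insert x A \<noteq> {}" by blast
    then have Gw: "G w = F w" using h3[of G w] \<open>has_ball G w\<close> Gm by blast
    then have "(v, w) \<in> ball_adj F" using adj_same[of v w] step by auto
    then show ?case using step Gw by auto
  qed
  have XCeq: "XC G x w \<longleftrightarrow> XC F x w" for w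
  proof
    assume "XC G x w"
    then obtain z where z: "has_ball G z" "x \<in> ball_at G z" "(z, w) \<in> (ball_adj G)\<^sup>*" unfolding XC_def by blast
    have Gz: "G z = F z" using h3[of G z] z by (auto intro: Gm)
    show "XC F x w" unfolding XC_def using bwd[OF z(3) z(1) z(2)] z Gz
      by (intro exI[of _ z]) (auto simp: has_ball_def ball_at_bl)
  next
    assume "XC F x w"
    then obtain z where z: "has_ball F z" "x \<in> ball_at F z" "(z, w) \<in> (ball_adj F)\<^sup>*" unfolding XC_def by blast
    have Gz: "G z = F z" using h3[of F z] z by (auto intro: Fm)
    show "XC G x w" unfolding XC_def using fwd[OF z(3) z(1) z(2)] z Gz
      by (intro exI[of _ z]) (auto simp: has_ball_def ball_at_bl)
  qed
  have XCval: "XC F x w \<Longrightarrow> G w = F w" for w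
  proof -
    assume "XC F x w"
    then obtain z where z: "has_ball F z" "x \<in> ball_at F z" "(z, w) \<in> (ball_adj F)\<^sup>*" unfolding XC_def by blast
    show "G w = F w" using fwd[OF z(3) z(1) z(2)] by simp
  qed
  have CG: "clump G x = A"
    unfolding A[symmetric] clump_XC
    using XCeq XCval by (auto simp: ball_at_bl)
  have "clump_height G x = (\<Sum>u\<in>A. fst (G u))" by (simp add: clump_height_def CG)
  also have "\<dots> = (\<Sum>u\<in>A. fst (F u))"
  proof (rule sum.cong[OF refl])
    fix u assume "u \<in> A"
    then show "fst (G u) = fst (F u)" using G[of u] by (auto simp: mA_def)
  qed
  also have "\<dots> = clump_height F x" by (simp add: clump_height_def A)
  finally show ?thesis using CG by simp
qed

lemma mono_clump:
  assumes A: "A = clump F x"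
    and G: "\<And>j. G j = (if F j \<in> mA A x j \<or> F' j \<in> mA A x j then F' j else F j)"
  shows "clump F y \<subseteq> A \<union> clump G y"
proof
  define Good where "Good v \<longleftrightarrow> has_ball F v \<and> ball_at F v \<inter> insert x A = {}" for v
  have L1': "has_ball F v \<Longrightarrow> Good v \<or> XC F x v" for v using L1[of F v x] A by (auto simp: Good_def)
  have XCadj: "XC F x v \<Longrightarrow> (v, w) \<in> ball_adj F \<Longrightarrow> XC F x w" for v w using XC_trans by blast
  have goodG: "snd (F v) \<le> snd (G v) \<and> has_ball G v \<and> ball_at F v \<subseteq> ball_at G v" if "Good v" for v
  proof -
    have vin: "v \<in> ball_at F v" by (simp add: ball_at_bl center_in_bl)
    have "v \<notin> A" using that vin by (auto simp: Good_def)
    have Fn: "F v \<notin> mA A x v" using that \<open>v \<notin> A\<close> by (auto simp: Good_def mA_def has_ball_def ball_at_bl)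
    have le: "snd (F v) \<le> snd (G v)"
    proof (cases "F' v \<in> mA A x v")
      case True
      then have "0 < snd (F' v) \<and> bl v (snd (F' v)) \<inter> insert x A \<noteq> {}" using \<open>v \<notin> A\<close> by (auto simp: mA_def)
      moreover have "bl v (snd (F v)) \<inter> insert x A = {}" using that by (simp add: Good_def ball_at_bl)
      ultimately have "\<not> snd (F' v) \<le> snd (F v)" using bl_mono[of "snd (F' v)" "snd (F v)" v] by blast
      then show ?thesis using G[of v] True by simp
    next
      case False
      then show ?thesis using G[of v] Fn by simp
    qed
    then show ?thesis using that bl_mono[OF le, of v] by (auto simp: Good_def has_ball_def ball_at_bl)
  qed
  have path: "(z0, v) \<in> (ball_adj G)\<^sup>* \<and> Good v"
    if "(z0, v) \<in> (ball_adj F)\<^sup>*" "has_ball F z0" "\<not> XC F x v" for z0 v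
    using that(1,3)
  proof (induction rule: rtrancl_induct)
    case base
    then show ?case using L1'[OF that(2)] by auto
  next
    case (step v w)
    have nv: "\<not> XC F x v" using step XCadj by blast
    with step.IH have IH: "(z0, v) \<in> (ball_adj G)\<^sup>*" "Good v" by auto
    have "has_ball F w" using step(2) by (simp add: ball_adj_def)
    then have gw: "Good w" using L1' step(4) by blast
    have "(v, w) \<in> ball_adj G"
      using step(2) goodG[OF IH(2)] goodG[OF gw] unfolding ball_adj_def by auto
    then show ?case using IH gw by auto
  qed
  fix u assume "u \<in> clump F y"
  then obtain z0 w where zw: "has_ball F z0" "y \<in> ball_at F z0" "(z0, w) \<in> (ball_adj F)\<^sup>*" "u \<in> ball_at F w"
    unfolding clump_def by blast
  show "u \<in> A \<union> clump G y"
  proof (cases "XC F x w")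
    case True
    then show ?thesis using XC_sub zw(4) A by blast
  next
    case False
    then have p: "(z0, w) \<in> (ball_adj G)\<^sup>*" "Good w" using path[OF zw(3) zw(1)] by auto
    have "\<not> XC F x z0" using False XC_trans zw(3) by blast
    then have "Good z0" using L1' zw(1) by blast
    then have "u \<in> clump G y" unfolding clump_def
      using goodG[OF \<open>Good z0\<close>] goodG[OF p(2)] zw p(1) by blast
    then show ?thesis by simp
  qed
qed

lemma distr_pair_snd':
  assumes "prob_space D" "sigma_finite_measure Q"
  shows "distr (D \<Otimes>\<^sub>M Q) Q snd = Q"
proof (intro measure_eqI)
  interpret D: prob_space D by fact
  interpret Q: sigma_finite_measure Q by fact
  fix A assume A: "A \<in> sets (distr (D \<Otimes>\<^sub>M Q) Q snd)"
  then have "emeasure (distr (D \<Otimes>\<^sub>M Q) Q snd) A = emeasure (D \<Otimes>\<^sub>M Q) (space D \<times> A)"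
    by (auto simp add: emeasure_distr space_pair_measure dest: sets.sets_into_space intro!: arg_cong2[where f=emeasure])
  with A show "emeasure (distr (D \<Otimes>\<^sub>M Q) Q snd) A = emeasure Q A"
    by (simp add: Q.emeasure_pair_measure_Times D.emeasure_space_1)
qed simp

lemma snd_borel_cs: "(snd :: real \<times> nat \<Rightarrow> nat) \<in> measurable borel (count_space UNIV)"
proof -
  have "(snd :: real \<times> nat \<Rightarrow> nat) \<in> measurable borel borel"
    by (intro borel_measurable_continuous_onI continuous_intros)
  then show ?thesis by (subst measurable_cong_sets[OF refl sets_borel_eq_count_space[symmetric]])
qed

lemma fst_borel: "(fst :: real \<times> nat \<Rightarrow> real) \<in> measurable borel borel"
  by (intro borel_measurable_continuous_onI continuous_intros)

lemma mA_sets[measurable]: "mA A x j \<in> sets (borel :: (real \<times> nat) measure)"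
proof -
  have "mA A x j = {v \<in> space borel. (0 < snd v \<and> bl j (snd v) \<inter> insert x A \<noteq> {}) \<or> (j \<in> A \<and> fst v \<noteq> 0)}"
    by (auto simp: mA_def)
  also have "\<dots> \<in> sets borel"
    using snd_borel_cs fst_borel by measurable
  finally show ?thesis .
qed

definition CH :: "int^'d::finite \<Rightarrow> 'd config \<Rightarrow> (int^'d) set \<times> real" where
  "CH x F = (clump F x, clump_height F x)"

definition rA :: "(int^'d::finite) set \<Rightarrow> int^'d \<Rightarrow> 'd config \<times> 'd config \<Rightarrow> 'd config" where
  "rA A x p = (\<lambda>j. if fst p j \<in> mA A x j \<or> snd p j \<in> mA A x j then snd p j else fst p j)"

definition Ynew :: "int^'d::finite \<Rightarrow> 'd config \<times> 'd config \<Rightarrow> 'd config" where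
  "Ynew x p = (if finite (clump (fst p) x) then rA (clump (fst p) x) x p else snd p)"

abbreviation B0 :: "'d::finite config measure" where
  "B0 \<equiv> PiM UNIV (\<lambda>_. borel)"

lemma rA_meas: "rA A x \<in> measurable (B0 \<Otimes>\<^sub>M B0) (B0 :: 'd::finite config measure)"
  unfolding rA_def
proof (rule measurable_PiM_single')
  fix j :: "int^'d"
  show "(\<lambda>p. if fst p j \<in> mA A x j \<or> snd p j \<in> mA A x j then snd p j else fst p j) \<in> (B0 \<Otimes>\<^sub>M B0) \<rightarrow>\<^sub>M borel"
    by measurable
qed (auto simp: space_PiM)

lemma pieces:
  fixes M :: "'b measure" and g :: "'b \<Rightarrow> 'd::finite config"
  assumes g: "\<And>A. finite A \<Longrightarrow> {w \<in> space M. clump (g w) x = A} \<in> sets M"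
    and gi: "{w \<in> space M. infinite (clump (g w) x)} \<in> sets M"
    and h: "\<And>A. finite A \<Longrightarrow> \<exists>k \<in> measurable M N. \<forall>w\<in>space M. clump (g w) x = A \<longrightarrow> f w = k w"
    and hi: "\<exists>k \<in> measurable M N. \<forall>w\<in>space M. infinite (clump (g w) x) \<longrightarrow> f w = k w"
  shows "f \<in> measurable M N"
proof (rule measurable_piecewise_restrict)
  let ?C = "(\<lambda>A. {w \<in> space M. clump (g w) x = A}) ` Collect finite \<union> {{w \<in> space M. infinite (clump (g w) x)}}"
  show "countable ?C" by (intro countable_Un countable_image countable_Collect_finite) auto
  show "\<Omega> \<inter> space M \<in> sets M" if "\<Omega> \<in> ?C" for \<Omega>
  proof -
    from that consider (f) A where "finite A" "\<Omega> = {w \<in> space M. clump (g w) x = A}"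
      | (i) "\<Omega> = {w \<in> space M. infinite (clump (g w) x)}" by blast
    then show ?thesis
    proof cases
      case f
      then have "\<Omega> \<inter> space M = {w \<in> space M. clump (g w) x = A}" by blast
      then show ?thesis using g[OF f(1)] by simp
    next
      case i
      then have "\<Omega> \<inter> space M = {w \<in> space M. infinite (clump (g w) x)}" by blast
      then show ?thesis using gi by simp
    qed
  qed
  show "space M \<subseteq> \<Union> ?C"
  proof
    fix w assume w: "w \<in> space M"
    show "w \<in> \<Union> ?C"
    proof (cases "finite (clump (g w) x)")
      case True
      then have "{w' \<in> space M. clump (g w') x = clump (g w) x} \<in> ?C" by blast
      then show ?thesis using w by blast
    next
      case False
      then show ?thesis using w by blast
    qed
  qed
  show "f \<in> restrict_space M \<Omega> \<rightarrow>\<^sub>M N" if "\<Omega> \<in> ?C" for \<Omega>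
  proof -
    from that consider (f) A where "finite A" "\<Omega> = {w \<in> space M. clump (g w) x = A}"
      | (i) "\<Omega> = {w \<in> space M. infinite (clump (g w) x)}" by blast
    then show ?thesis
    proof cases
      case f
      then obtain k where k: "k \<in> measurable M N" "\<forall>w\<in>space M. clump (g w) x = A \<longrightarrow> f w = k w" using h by blast
      have "k \<in> restrict_space M \<Omega> \<rightarrow>\<^sub>M N" by (rule measurable_restrict_space1[OF k(1)])
      then show ?thesis
        by (rule measurable_cong[THEN iffD1, rotated]) (use f k in \<open>auto simp: space_restrict_space\<close>)
    next
      case i
      then obtain k where k: "k \<in> measurable M N" "\<forall>w\<in>space M. infinite (clump (g w) x) \<longrightarrow> f w = k w" using hi by blast
      have "k \<in> restrict_space M \<Omega> \<rightarrow>\<^sub>M N" by (rule measurable_restrict_space1[OF k(1)])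
      then show ?thesis
        by (rule measurable_cong[THEN iffD1, rotated]) (use i k in \<open>auto simp: space_restrict_space\<close>)
    qed
  qed
qed

lemma height_meas: "(\<lambda>F::'d::finite config. clump_height F x) \<in> borel_measurable B0"
proof (rule pieces[where g="\<lambda>F. F" and x=x and f="\<lambda>F. clump_height F x" and M=B0 and N=borel])
  show "{w \<in> space B0. clump w x = A} \<in> sets (B0::'d config measure)" for A
    using clump_eq_sets[of x A] by (simp add: space_PiM)
  show "{w \<in> space B0. infinite (clump w x)} \<in> sets (B0::'d config measure)"
  proof -
    have "{w \<in> space B0. infinite (clump w x)} = space B0 - {F::'d config. finite (clump F x)}"
      by (auto simp: space_PiM)
    also have "\<dots> \<in> sets (B0::'d config measure)"
      by (rule sets.compl_sets[OF clump_finite_sets])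
    finally show ?thesis .
  qed
  show "\<exists>k\<in>borel_measurable B0. \<forall>w\<in>space B0. clump w x = A \<longrightarrow> clump_height w x = k w" for A
    by (intro bexI[of _ "\<lambda>F. \<Sum>u\<in>A. fst (F u)"]) (auto simp: clump_height_def)
  show "\<exists>k\<in>borel_measurable B0. \<forall>w\<in>space B0. infinite (clump w x) \<longrightarrow> clump_height w x = k w"
    by (intro bexI[of _ "\<lambda>F. 0"]) (auto simp: clump_height_def)
qed

lemma CH_meas: "CH x \<in> measurable (B0::'d::finite config measure) clump_space"
  unfolding CH_def clump_space_def
  by (intro measurable_Pair clump_meas height_meas)

lemma Ynew_meas: "Ynew x \<in> measurable (B0 \<Otimes>\<^sub>M B0) (B0::'d::finite config measure)"
proof (rule pieces[where g=fst and x=x and f="Ynew x" and M="B0 \<Otimes>\<^sub>M B0" and N=B0])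
  show "{w \<in> space (B0 \<Otimes>\<^sub>M B0). clump (fst w) x = A} \<in> sets (B0 \<Otimes>\<^sub>M (B0::'d config measure))" for A
  proof -
    have "fst -` {F::'d config. clump F x = A} \<inter> space (B0 \<Otimes>\<^sub>M (B0::'d config measure)) \<in> sets (B0 \<Otimes>\<^sub>M (B0::'d config measure))"
      by (rule measurable_sets[OF measurable_fst clump_eq_sets])
    moreover have "fst -` {F::'d config. clump F x = A} \<inter> space (B0 \<Otimes>\<^sub>M (B0::'d config measure)) = {w \<in> space (B0 \<Otimes>\<^sub>M B0). clump (fst w) x = A}"
      by auto
    ultimately show ?thesis by simp
  qed
  show "{w \<in> space (B0 \<Otimes>\<^sub>M B0). infinite (clump (fst w) x)} \<in> sets (B0 \<Otimes>\<^sub>M (B0::'d config measure))"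
  proof -
    have "{w \<in> space (B0 \<Otimes>\<^sub>M B0). infinite (clump (fst w) x)} = space (B0 \<Otimes>\<^sub>M (B0::'d config measure)) - {w \<in> space (B0 \<Otimes>\<^sub>M B0). finite (clump (fst w) x)}"
      by auto
    also have "\<dots> \<in> sets (B0 \<Otimes>\<^sub>M (B0::'d config measure))"
    proof -
      have "fst -` {F::'d config. finite (clump F x)} \<inter> space (B0 \<Otimes>\<^sub>M (B0::'d config measure)) \<in> sets (B0 \<Otimes>\<^sub>M (B0::'d config measure))"
        by (rule measurable_sets[OF measurable_fst clump_finite_sets])
      moreover have "fst -` {F::'d config. finite (clump F x)} \<inter> space (B0 \<Otimes>\<^sub>M (B0::'d config measure)) = {w \<in> space (B0 \<Otimes>\<^sub>M B0). finite (clump (fst w) x)}"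
        by auto
      ultimately show ?thesis by (intro sets.compl_sets) simp
    qed
    finally show ?thesis .
  qed
  show "\<exists>k\<in>(B0 \<Otimes>\<^sub>M B0) \<rightarrow>\<^sub>M B0. \<forall>w\<in>space (B0 \<Otimes>\<^sub>M B0). clump (fst w) x = A \<longrightarrow> Ynew x w = k w" if "finite A" for A
  proof (rule bexI[of _ "rA A x"])
    show "rA A x \<in> (B0 \<Otimes>\<^sub>M B0) \<rightarrow>\<^sub>M B0" by (rule rA_meas)
    show "\<forall>w\<in>space (B0 \<Otimes>\<^sub>M B0). clump (fst w) x = A \<longrightarrow> Ynew x w = rA A x w"
      using that by (simp add: Ynew_def)
  qed
  show "\<exists>k\<in>(B0 \<Otimes>\<^sub>M B0) \<rightarrow>\<^sub>M B0. \<forall>w\<in>space (B0 \<Otimes>\<^sub>M B0). infinite (clump (fst w) x) \<longrightarrow> Ynew x w = k w"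
  proof (rule bexI[of _ snd])
    show "snd \<in> (B0 \<Otimes>\<^sub>M B0) \<rightarrow>\<^sub>M (B0::'d config measure)" by (rule measurable_snd)
    show "\<forall>w\<in>space (B0 \<Otimes>\<^sub>M B0). infinite (clump (fst w) x) \<longrightarrow> Ynew x w = snd w"
      by (simp add: Ynew_def)
  qed
qed


lemma KD:
  fixes S :: "(real \<times> nat) measure" and x :: "int^'d::finite"
  assumes S: "prob_space S" and sS: "sets S = sets borel"
    and fin: "AE F in PiM UNIV (\<lambda>_. S). finite (clump F x)"
  shows "distr (PiM UNIV (\<lambda>_. S) \<Otimes>\<^sub>M PiM UNIV (\<lambda>_. S)) (clump_space \<Otimes>\<^sub>M PiM UNIV (\<lambda>_. S))
           (\<lambda>p. (CH x (fst p), Ynew x p))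
       = distr (PiM UNIV (\<lambda>_. S)) clump_space (CH x) \<Otimes>\<^sub>M PiM UNIV (\<lambda>_. S)"
proof -
  let ?Q = "PiM (UNIV::(int^'d) set) (\<lambda>_. S)"
  let ?QQ = "?Q \<Otimes>\<^sub>M ?Q"
  let ?D = "distr ?Q clump_space (CH x)"
  let ?\<psi> = "\<lambda>p. (CH x (fst p), Ynew x p)"
  interpret S: prob_space S by fact
  interpret Q: prob_space ?Q by (intro prob_space_PiM S)
  interpret QQ: pair_prob_space ?Q ?Q ..
  have sp: "space S = UNIV" using sets_eq_imp_space_eq[OF sS] by simp
  have spQ: "space ?Q = UNIV" by (simp add: space_PiM_UNIV sp)
  have spQQ: "space ?QQ = UNIV" by (simp add: space_pair_measure spQ)
  have sQ: "sets ?Q = sets (B0::'d config measure)" using sS by (intro sets_PiM_cong) auto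
  have sQQ: "sets ?QQ = sets (B0 \<Otimes>\<^sub>M (B0::'d config measure))" by (intro sets_pair_measure_cong sQ)
  have CHm: "CH x \<in> measurable ?Q clump_space"
    using CH_meas measurable_cong_sets[OF sQ refl] by blast
  have Ym: "Ynew x \<in> measurable ?QQ ?Q"
    using Ynew_meas measurable_cong_sets[OF sQQ sQ] by blast
  have rAm: "rA A x \<in> measurable ?QQ ?Q" for A
    using rA_meas measurable_cong_sets[OF sQQ sQ] by blast
  have psim: "?\<psi> \<in> measurable ?QQ (clump_space \<Otimes>\<^sub>M ?Q)"
    using CHm Ym by measurable
  interpret D: prob_space ?D by (rule Q.prob_space_distr[OF CHm])
  define N where "N = {F::'d config. infinite (clump F x)}"
  have Ns: "N \<in> sets ?Q"
  proof -
    have "N = space ?Q - {F::'d config. finite (clump F x)}" by (auto simp: N_def spQ)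
    also have "\<dots> \<in> sets ?Q" using clump_finite_sets[of x] sQ by (intro sets.compl_sets) auto
    finally show ?thesis .
  qed
  have N0: "emeasure ?Q N = 0"
    using fin by (subst (asm) AE_iff_measurable[OF Ns]) (auto simp: N_def spQ)
  have NQQ: "N \<times> UNIV \<in> null_sets ?QQ"
  proof -
    have "N \<times> UNIV = N \<times> space ?Q" by (simp add: spQ)
    moreover have "emeasure ?QQ (N \<times> space ?Q) = 0" using Ns N0 by (simp add: Q.emeasure_pair_measure_Times)
    ultimately show ?thesis using Ns by (simp add: null_sets_def)
  qed
  define E where "E A0 A = {F. clump F x = A} \<inter> (CH x -` A0)" for A0 A
  have Es: "E A0 A \<in> sets ?Q" if "A0 \<in> sets clump_space" for A0 A
  proof -
    have "E A0 A = {F. clump F x = A} \<inter> (CH x -` A0 \<inter> space ?Q)" by (auto simp: E_def spQ)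
    also have "\<dots> \<in> sets ?Q" using clump_eq_sets[of x A] sQ measurable_sets[OF CHm that] by auto
    finally show ?thesis .
  qed
  define W where "W A0 B A = {p. fst p \<in> E A0 A \<and> rA A x p \<in> B}" for A0 B A
  have Ws: "W A0 B A \<in> sets ?QQ" if "A0 \<in> sets clump_space" "B \<in> sets ?Q" for A0 B A
  proof -
    have "W A0 B A = (fst -` E A0 A \<inter> space ?QQ) \<inter> (rA A x -` B \<inter> space ?QQ)" by (auto simp: W_def spQQ)
    also have "\<dots> \<in> sets ?QQ"
      using measurable_sets[OF measurable_fst Es[OF that(1)]] measurable_sets[OF rAm that(2)] by auto
    finally show ?thesis .
  qed
  have WA: "emeasure ?QQ (W A0 B A) = emeasure ?Q (E A0 A) * emeasure ?Q B"
    if A0: "A0 \<in> sets clump_space" and B: "B \<in> sets ?Q" for A0 B A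
  proof -
    have "emeasure ?QQ {p. fst p \<in> E A0 A \<and> (\<lambda>i. if fst p i \<in> mA A x i \<or> snd p i \<in> mA A x i then snd p i else fst p i) \<in> B}
       = emeasure ?Q (E A0 A) * emeasure ?Q B"
    proof (rule core2[OF S _ sp Es[OF A0] _ B])
      show "mA A x i \<in> sets S" for i using sS by simp
      fix F G :: "'d config"
      assume F: "F \<in> E A0 A" and G: "\<And>j. G j = F j \<or> (F j \<notin> mA A x j \<and> G j \<notin> mA A x j)"
      from F have cF: "clump F x = A" by (simp add: E_def)
      from inv_clump[OF cF G] have "clump G x = A" "clump_height G x = clump_height F x" by auto
      then show "G \<in> E A0 A" using F cF by (simp add: E_def CH_def)
    qed
    then show ?thesis by (simp add: W_def rA_def)
  qed
  show ?thesis
  proof (rule pair_measure_eqI[symmetric])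
    show "sigma_finite_measure ?D" by unfold_locales
    show "sigma_finite_measure ?Q" by unfold_locales
    show "sets (?D \<Otimes>\<^sub>M ?Q) = sets (distr ?QQ (clump_space \<Otimes>\<^sub>M ?Q) ?\<psi>)" by simp
  next
    fix A0 B assume A0: "A0 \<in> sets ?D" and B: "B \<in> sets ?Q"
    then have A0': "A0 \<in> sets clump_space" by simp
    define Wt where "Wt = {p. CH x (fst p) \<in> A0 \<and> Ynew x p \<in> B}"
    have Wts: "Wt \<in> sets ?QQ"
    proof -
      have "Wt = ?\<psi> -` (A0 \<times> B) \<inter> space ?QQ" by (auto simp: Wt_def spQQ)
      then show ?thesis using measurable_sets[OF psim] A0' B by auto
    qed
    have "emeasure (distr ?QQ (clump_space \<Otimes>\<^sub>M ?Q) ?\<psi>) (A0 \<times> B) = emeasure ?QQ (?\<psi> -` (A0 \<times> B) \<inter> space ?QQ)"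
      using A0' B by (intro emeasure_distr psim) auto
    also have "?\<psi> -` (A0 \<times> B) \<inter> space ?QQ = Wt" by (auto simp: Wt_def spQQ)
    also have "Wt = (\<Union>A\<in>Collect finite. W A0 B A) \<union> (Wt \<inter> (N \<times> UNIV))"
    proof (intro set_eqI iffI)
      fix p assume p: "p \<in> Wt"
      show "p \<in> (\<Union>A\<in>Collect finite. W A0 B A) \<union> (Wt \<inter> (N \<times> UNIV))"
      proof (cases "finite (clump (fst p) x)")
        case True
        then have "p \<in> W A0 B (clump (fst p) x)" using p by (auto simp: W_def E_def Wt_def Ynew_def)
        then show ?thesis using True by blast
      next
        case False
        then show ?thesis using p by (auto simp: N_def mem_Times_iff)
      qed
    next
      fix p assume "p \<in> (\<Union>A\<in>Collect finite. W A0 B A) \<union> (Wt \<inter> (N \<times> UNIV))"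
      then show "p \<in> Wt" by (auto simp: W_def E_def Wt_def Ynew_def)
    qed
    also have "emeasure ?QQ \<dots> = emeasure ?QQ (\<Union>A\<in>Collect finite. W A0 B A)"
    proof (rule emeasure_Un_null_set)
      show "(\<Union>A\<in>Collect finite. W A0 B A) \<in> sets ?QQ"
        using Ws[OF A0' B] by (intro sets.countable_UN'' countable_Collect_finite) auto
      show "Wt \<inter> (N \<times> UNIV) \<in> null_sets ?QQ"
        by (rule null_set_Int1[OF NQQ Wts])
    qed
    also have "\<dots> = (\<integral>\<^sup>+A. emeasure ?QQ (W A0 B A) \<partial>count_space (Collect finite))"
      using Ws[OF A0' B] by (intro emeasure_UN_countable countable_Collect_finite)
         (auto simp: disjoint_family_on_def W_def E_def)
    also have "\<dots> = (\<integral>\<^sup>+A. emeasure ?Q (E A0 A) * emeasure ?Q B \<partial>count_space (Collect finite))"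
      using WA[OF A0' B] by simp
    also have "\<dots> = (\<integral>\<^sup>+A. emeasure ?Q (E A0 A) \<partial>count_space (Collect finite)) * emeasure ?Q B"
      by (rule nn_integral_multc) simp
    also have "(\<integral>\<^sup>+A. emeasure ?Q (E A0 A) \<partial>count_space (Collect finite)) = emeasure ?Q (\<Union>A\<in>Collect finite. E A0 A)"
      using Es[OF A0'] by (intro emeasure_UN_countable[symmetric] countable_Collect_finite)
         (auto simp: disjoint_family_on_def E_def)
    also have "emeasure ?Q (\<Union>A\<in>Collect finite. E A0 A) = emeasure ?Q ((\<Union>A\<in>Collect finite. E A0 A) \<union> (CH x -` A0 \<inter> N))"
    proof (rule emeasure_Un_null_set[symmetric])
      show "(\<Union>A\<in>Collect finite. E A0 A) \<in> sets ?Q"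
        using Es[OF A0'] by (intro sets.countable_UN'' countable_Collect_finite) auto
      have Nn: "N \<in> null_sets ?Q" using Ns N0 by (simp add: null_sets_def)
      have "CH x -` A0 \<inter> N = (CH x -` A0 \<inter> space ?Q) \<inter> N" by (simp add: spQ)
      then show "CH x -` A0 \<inter> N \<in> null_sets ?Q"
        using null_set_Int1[OF Nn measurable_sets[OF CHm A0']] by simp
    qed
    also have "(\<Union>A\<in>Collect finite. E A0 A) \<union> (CH x -` A0 \<inter> N) = CH x -` A0 \<inter> space ?Q"
      by (auto simp: E_def N_def spQ)
    also have "emeasure ?Q (CH x -` A0 \<inter> space ?Q) = emeasure ?D A0"
      using A0' by (intro emeasure_distr[symmetric] CHm)
    finally show "emeasure ?D A0 * emeasure ?Q B = emeasure (distr ?QQ (clump_space \<Otimes>\<^sub>M ?Q) ?\<psi>) (A0 \<times> B)"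
      by simp
  qed
qed

theorem lemma1:
  fixes lam :: real
    and nu :: "(nat \<times> real) measure"
    and M :: "'a measure"
    and X :: "int ^ 'd::finite \<Rightarrow> 'a \<Rightarrow> real \<times> nat"
    and x y :: "int ^ 'd"
  assumes lam_pos: "0 < lam"
    and subcrit: "ereal lam < lambda_c TYPE('d) nu"
    and nu_prob: "prob_space nu"
    and nu_sets: "sets nu = sets borel"
    and R_pos: "AE p in nu. fst p \<ge> 1"
    and sigma_nonneg: "AE p in nu. snd p \<ge> 0"
    and M_prob: "prob_space M"
    and X_indep: "prob_space.indep_vars M (\<lambda>_. borel) X UNIV"
    and X_law: "\<And>z. distr M borel (X z) = site_law lam nu"
    and xy: "x \<noteq> y"
  shows "\<exists>(N :: ('a \<times> (int ^ 'd \<Rightarrow> real \<times> nat)) measure) \<pi> Y.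
           prob_space N \<and>
           \<pi> \<in> measurable N M \<and> distr N M \<pi> = M \<and>
           prob_space.indep_vars N (\<lambda>_. borel) Y UNIV \<and>
           (\<forall>z. distr N borel (Y z) = site_law lam nu) \<and>
           (AE \<omega> in N.
              clump (\<lambda>z. X z (\<pi> \<omega>)) x \<union> clump (\<lambda>z. X z (\<pi> \<omega>)) y
                \<subseteq> clump (\<lambda>z. X z (\<pi> \<omega>)) x \<union> clump (\<lambda>z. Y z \<omega>) y) \<and>
           prob_space.indep_var N
              clump_space (\<lambda>\<omega>. (clump (\<lambda>z. X z (\<pi> \<omega>)) x, clump_height (\<lambda>z. X z (\<pi> \<omega>)) x))
              clump_space (\<lambda>\<omega>. (clump (\<lambda>z. Y z \<omega>) y, clump_height (\<lambda>z. Y z \<omega>) y)) \<and>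
           distr N clump_space (\<lambda>\<omega>. (clump (\<lambda>z. Y z \<omega>) y, clump_height (\<lambda>z. Y z \<omega>) y))
             = distr M clump_space (\<lambda>\<omega>. (clump (\<lambda>z. X z \<omega>) y, clump_height (\<lambda>z. X z \<omega>) y))"
proof -
  let ?S = "site_law lam nu"
  let ?Q = "PiM (UNIV::(int^'d) set) (\<lambda>_. ?S)"
  let ?QQ = "?Q \<Otimes>\<^sub>M ?Q"
  let ?cs = "clump_space :: ((int^'d) set \<times> real) measure"
  interpret Mp: prob_space M by (rule M_prob)
  have Xm: "X z \<in> measurable M borel" for z
    using X_indep unfolding Mp.indep_vars_def by auto
  have Sprob: "prob_space ?S"
    using Mp.prob_space_distr[OF Xm[of x]] X_law[of x] by simp
  interpret S: prob_space ?S by (rule Sprob)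
  have sS: "sets ?S = sets borel" using X_law[of x] by (metis sets_distr)
  have sp: "space ?S = UNIV" using sets_eq_imp_space_eq[OF sS] by simp
  interpret Q: prob_space ?Q by (intro prob_space_PiM Sprob)
  interpret QQ: pair_prob_space ?Q ?Q ..
  have spQ: "space ?Q = UNIV" by (simp add: space_PiM_UNIV sp)
  have sQ: "sets ?Q = sets (B0::'d config measure)" using sS by (intro sets_PiM_cong) auto
  have sQQ: "sets ?QQ = sets (B0 \<Otimes>\<^sub>M (B0::'d config measure))" by (intro sets_pair_measure_cong sQ)
  have CHm: "CH z \<in> measurable ?Q ?cs" for z
    using CH_meas measurable_cong_sets[OF sQ refl] by blast
  have Ym: "Ynew x \<in> measurable ?QQ ?Q"
    using Ynew_meas measurable_cong_sets[OF sQQ sQ] by blast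
  define \<Phi> where "\<Phi> a = (\<lambda>z. X z a)" for a
  have \<Phi>B: "\<Phi> \<in> measurable M (B0::'d config measure)"
    unfolding \<Phi>_def by (rule measurable_PiM_single') (auto simp: Xm space_PiM)
  have \<Phi>m: "\<Phi> \<in> measurable M ?Q"
    using \<Phi>B measurable_cong_sets[OF refl sQ] by blast
  have \<Phi>d: "distr M ?Q \<Phi> = ?Q"
  proof -
    have "distr M (B0::'d config measure) (\<lambda>a. \<lambda>i\<in>UNIV. X i a) = PiM UNIV (\<lambda>i. distr M borel (X i))"
      using Mp.indep_vars_iff_distr_eq_PiM[where I="UNIV::(int^'d) set" and M'="\<lambda>_. borel" and X=X] Xm X_indep by simp
    moreover have "(\<lambda>a. \<lambda>i\<in>UNIV. X i a) = \<Phi>" by (simp add: \<Phi>_def fun_eq_iff)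
    ultimately have "distr M (B0::'d config measure) \<Phi> = ?Q" by (simp add: X_law)
    moreover have "distr M ?Q \<Phi> = distr M (B0::'d config measure) \<Phi>" by (rule distr_cong[OF refl sQ refl])
    ultimately show ?thesis by simp
  qed
  have subc: "subcritical TYPE('d) lam nu"
  proof -
    from subcrit obtain e where e: "e \<in> {ereal l0 | l0. 0 < l0 \<and> (\<forall>l. 0 < l \<and> l < l0 \<longrightarrow> subcritical TYPE('d) l nu)}"
      "ereal lam < e" unfolding lambda_c_def by (auto simp: less_Sup_iff)
    then obtain l0 where "e = ereal l0" "\<forall>l. 0 < l \<and> l < l0 \<longrightarrow> subcritical TYPE('d) l nu" by auto
    with e(2) lam_pos show ?thesis by auto
  qed
  have fin: "AE F in ?Q. finite (clump F x)"
    using subc unfolding subcritical_def canonical_model_def by auto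
  have KDx: "distr ?QQ (?cs \<Otimes>\<^sub>M ?Q) (\<lambda>p. (CH x (fst p), Ynew x p)) = distr ?Q ?cs (CH x) \<Otimes>\<^sub>M ?Q"
    by (rule KD[OF Sprob sS fin])
  let ?\<psi> = "\<lambda>p. (CH x (fst p), Ynew x p)"
  have psim: "?\<psi> \<in> measurable ?QQ (?cs \<Otimes>\<^sub>M ?Q)"
    using CHm Ym by measurable
  let ?D = "distr ?Q ?cs (CH x)"
  interpret D: prob_space ?D by (rule Q.prob_space_distr[OF CHm])
  have Ydist: "distr ?QQ ?Q (Ynew x) = ?Q"
  proof -
    have "distr ?QQ ?Q (Ynew x) = distr (distr ?QQ (?cs \<Otimes>\<^sub>M ?Q) ?\<psi>) ?Q snd"
      by (simp add: distr_distr[OF measurable_snd psim] comp_def)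
    also have "\<dots> = ?Q" unfolding KDx
      by (rule distr_pair_snd'[OF D.prob_space_axioms]) unfold_locales
    finally show ?thesis .
  qed
  define N where "N = M \<Otimes>\<^sub>M ?Q"
  interpret NP: pair_prob_space M ?Q ..
  have Nprob: "prob_space N" unfolding N_def by (rule NP.prob_space_axioms)
  interpret Np: prob_space N by (rule Nprob)
  define \<Psi> :: "'a \<times> 'd config \<Rightarrow> 'd config \<times> 'd config" where "\<Psi> \<omega> = (\<Phi> (fst \<omega>), snd \<omega>)" for \<omega>
  have \<Psi>m: "\<Psi> \<in> measurable N ?QQ"
    unfolding \<Psi>_def N_def using \<Phi>m by measurable
  have \<Psi>d: "distr N ?QQ \<Psi> = ?QQ"
  proof -
    have "distr M ?Q \<Phi> \<Otimes>\<^sub>M distr ?Q ?Q (\<lambda>y. y) = distr (M \<Otimes>\<^sub>M ?Q) ?QQ (\<lambda>(x, y). (\<Phi> x, y))"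
    proof (rule pair_measure_distr[OF \<Phi>m])
      show "(\<lambda>y. y) \<in> ?Q \<rightarrow>\<^sub>M ?Q" by simp
      have "sigma_finite_measure ?Q" by unfold_locales
      then show "sigma_finite_measure (distr ?Q ?Q (\<lambda>y. y))" by simp
    qed
    then show ?thesis
      by (simp add: \<Phi>d N_def \<Psi>_def[abs_def] split_beta')
  qed
  define Y where "Y z \<omega> = Ynew x (\<Psi> \<omega>) z" for z \<omega>
  have Yv: "(\<lambda>\<omega>. \<lambda>z. Y z \<omega>) = Ynew x \<circ> \<Psi>" by (simp add: Y_def fun_eq_iff)
  have Yvm: "Ynew x \<circ> \<Psi> \<in> measurable N ?Q" by (rule measurable_comp[OF \<Psi>m Ym])
  have YvD: "distr N ?Q (Ynew x \<circ> \<Psi>) = ?Q"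
    using distr_distr[OF Ym \<Psi>m] \<Psi>d Ydist by simp
  have Yzm: "Y z \<in> measurable N borel" for z
  proof -
    have "(\<lambda>F. F z) \<circ> (Ynew x \<circ> \<Psi>) \<in> measurable N ?S"
      by (rule measurable_comp[OF Yvm]) simp
    then have "(\<lambda>\<omega>. Ynew x (\<Psi> \<omega>) z) \<in> measurable N ?S" by (simp add: comp_def)
    then show ?thesis using measurable_cong_sets[OF refl sS, of N] by (simp add: Y_def[abs_def])
  qed
  have Yzd: "distr N borel (Y z) = ?S" for z
  proof -
    have yz: "Y z = (\<lambda>F. F z) \<circ> (Ynew x \<circ> \<Psi>)" by (simp add: Y_def fun_eq_iff)
    have "distr N borel (Y z) = distr N ?S (Y z)" by (rule distr_cong[OF refl sS[symmetric] refl])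
    also have "\<dots> = distr (distr N ?Q (Ynew x \<circ> \<Psi>)) ?S (\<lambda>F. F z)"
      unfolding yz
      by (rule distr_distr[symmetric, OF _ Yvm]) simp
    also have "\<dots> = ?S" unfolding YvD by (rule distr_PiM_component) (auto intro: Sprob)
    finally show ?thesis .
  qed
  have indY: "Np.indep_vars (\<lambda>_. borel) Y UNIV"
  proof -
    have "distr N (B0::'d config measure) (\<lambda>\<omega>. \<lambda>i\<in>UNIV. Y i \<omega>) = distr N ?Q (Ynew x \<circ> \<Psi>)"
      using Yv by (intro distr_cong[OF refl sQ[symmetric]]) (auto simp: fun_eq_iff)
    also have "\<dots> = PiM UNIV (\<lambda>i. distr N borel (Y i))" by (simp add: YvD Yzd)
    finally show ?thesis
      using Np.indep_vars_iff_distr_eq_PiM[where I="UNIV::(int^'d) set" and M'="\<lambda>_. borel" and X=Y] Yzm by simp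
  qed
  have AEfQQ: "AE p in ?QQ. finite (clump (fst p) x)"
  proof (rule AE_distrD[OF measurable_fst])
    show "AE p in distr ?QQ ?Q fst. finite (clump p x)"
      by (subst Q.distr_pair_fst) (rule fin)
  qed
  have AEmono: "AE p in ?QQ. clump (fst p) x \<union> clump (fst p) y \<subseteq> clump (fst p) x \<union> clump (Ynew x p) y"
    using AEfQQ
  proof (rule eventually_mono)
    fix p :: "'d config \<times> 'd config"
    assume f: "finite (clump (fst p) x)"
    have "clump (fst p) y \<subseteq> clump (fst p) x \<union> clump (Ynew x p) y"
      by (rule mono_clump[where F'="snd p"]) (auto simp: Ynew_def rA_def f)
    then show "clump (fst p) x \<union> clump (fst p) y \<subseteq> clump (fst p) x \<union> clump (Ynew x p) y" by blast
  qed
  have AEN: "AE \<omega> in N. clump (\<lambda>z. X z (fst \<omega>)) x \<union> clump (\<lambda>z. X z (fst \<omega>)) y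
                \<subseteq> clump (\<lambda>z. X z (fst \<omega>)) x \<union> clump (\<lambda>z. Y z \<omega>) y"
  proof -
    have "AE \<omega> in N. clump (fst (\<Psi> \<omega>)) x \<union> clump (fst (\<Psi> \<omega>)) y \<subseteq> clump (fst (\<Psi> \<omega>)) x \<union> clump (Ynew x (\<Psi> \<omega>)) y"
      by (rule AE_distrD[OF \<Psi>m]) (subst \<Psi>d, rule AEmono)
    then show ?thesis by (simp add: \<Psi>_def \<Phi>_def Y_def)
  qed
  define f :: "'a \<times> 'd config \<Rightarrow> (int^'d) set \<times> real" where "f \<omega> = (clump (\<lambda>z. X z (fst \<omega>)) x, clump_height (\<lambda>z. X z (fst \<omega>)) x)" for \<omega>
  define g :: "'a \<times> 'd config \<Rightarrow> (int^'d) set \<times> real" where "g \<omega> = (clump (\<lambda>z. Y z \<omega>) y, clump_height (\<lambda>z. Y z \<omega>) y)" for \<omega>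
  have f_eq: "f = fst \<circ> ?\<psi> \<circ> \<Psi>" by (simp add: f_def CH_def \<Psi>_def \<Phi>_def fun_eq_iff)
  have g_eq: "g = CH y \<circ> snd \<circ> ?\<psi> \<circ> \<Psi>" by (simp add: g_def CH_def Y_def fun_eq_iff)
  have psiPm: "?\<psi> \<circ> \<Psi> \<in> measurable N (?cs \<Otimes>\<^sub>M ?Q)" by (rule measurable_comp[OF \<Psi>m psim])
  have DD: "distr N (?cs \<Otimes>\<^sub>M ?Q) (?\<psi> \<circ> \<Psi>) = ?D \<Otimes>\<^sub>M ?Q"
  proof -
    have "distr N (?cs \<Otimes>\<^sub>M ?Q) (?\<psi> \<circ> \<Psi>) = distr (distr N ?QQ \<Psi>) (?cs \<Otimes>\<^sub>M ?Q) ?\<psi>"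
      by (rule distr_distr[symmetric, OF psim \<Psi>m])
    also have "\<dots> = ?D \<Otimes>\<^sub>M ?Q" by (simp add: \<Psi>d KDx)
    finally show ?thesis .
  qed
  have sD: "sets ?D = sets ?cs" by simp
  have fstm: "fst \<in> measurable (?cs \<Otimes>\<^sub>M ?Q) ?cs" by simp
  have sndm: "CH y \<circ> snd \<in> measurable (?cs \<Otimes>\<^sub>M ?Q) ?cs"
    by (rule measurable_comp[OF measurable_snd CHm])
  have fm: "f \<in> measurable N ?cs" unfolding f_eq
    using measurable_comp[OF psiPm fstm] by (simp add: comp_assoc)
  have gm: "g \<in> measurable N ?cs" unfolding g_eq
    using measurable_comp[OF psiPm sndm] by (simp add: comp_assoc)
  let ?Dy = "distr ?Q ?cs (CH y)"
  interpret Dy: prob_space ?Dy by (rule Q.prob_space_distr[OF CHm])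
  have fd: "distr N ?cs f = ?D"
  proof -
    have "distr N ?cs f = distr (distr N (?cs \<Otimes>\<^sub>M ?Q) (?\<psi> \<circ> \<Psi>)) ?cs fst"
      unfolding f_eq using distr_distr[OF fstm psiPm] by (simp add: comp_assoc)
    also have "\<dots> = distr (?D \<Otimes>\<^sub>M ?Q) ?cs fst" by (simp add: DD)
    also have "\<dots> = distr (?D \<Otimes>\<^sub>M ?Q) ?D fst" by (rule distr_cong[OF refl sD[symmetric] refl])
    also have "\<dots> = ?D" by (rule Q.distr_pair_fst)
    finally show ?thesis .
  qed
  have gd: "distr N ?cs g = ?Dy"
  proof -
    have "distr N ?cs g = distr (distr N (?cs \<Otimes>\<^sub>M ?Q) (?\<psi> \<circ> \<Psi>)) ?cs (CH y \<circ> snd)"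
      unfolding g_eq using distr_distr[OF sndm psiPm] by (simp add: comp_assoc)
    also have "\<dots> = distr (?D \<Otimes>\<^sub>M ?Q) ?cs (CH y \<circ> snd)" by (simp add: DD)
    also have "\<dots> = distr (distr (?D \<Otimes>\<^sub>M ?Q) ?Q snd) ?cs (CH y)"
      by (rule distr_distr[symmetric, OF CHm measurable_snd])
    also have "distr (?D \<Otimes>\<^sub>M ?Q) ?Q snd = ?Q"
      by (rule distr_pair_snd'[OF D.prob_space_axioms]) unfold_locales
    finally show ?thesis .
  qed
  have fgd: "distr N (?cs \<Otimes>\<^sub>M ?cs) (\<lambda>\<omega>. (f \<omega>, g \<omega>)) = ?D \<Otimes>\<^sub>M ?Dy"
  proof -
    let ?h = "\<lambda>(a, b). (a, CH y b)"
    have hm: "?h \<in> measurable (?cs \<Otimes>\<^sub>M ?Q) (?cs \<Otimes>\<^sub>M ?cs)" using CHm by measurable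
    have "(\<lambda>\<omega>. (f \<omega>, g \<omega>)) = ?h \<circ> (?\<psi> \<circ> \<Psi>)"
      by (simp add: f_eq g_eq fun_eq_iff)
    then have "distr N (?cs \<Otimes>\<^sub>M ?cs) (\<lambda>\<omega>. (f \<omega>, g \<omega>)) = distr (distr N (?cs \<Otimes>\<^sub>M ?Q) (?\<psi> \<circ> \<Psi>)) (?cs \<Otimes>\<^sub>M ?cs) ?h"
      using distr_distr[OF hm psiPm] by simp
    also have "\<dots> = distr (?D \<Otimes>\<^sub>M ?Q) (?cs \<Otimes>\<^sub>M ?cs) ?h" by (simp add: DD)
    also have "\<dots> = distr ?D ?cs (\<lambda>a. a) \<Otimes>\<^sub>M ?Dy"
    proof (rule pair_measure_distr[symmetric])
      show "(\<lambda>a. a) \<in> ?D \<rightarrow>\<^sub>M ?cs" by simp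
      show "CH y \<in> ?Q \<rightarrow>\<^sub>M ?cs" by (rule CHm)
      show "sigma_finite_measure ?Dy" by unfold_locales
    qed
    also have "distr ?D ?cs (\<lambda>a. a) = distr ?D ?D (\<lambda>a. a)" by (rule distr_cong[OF refl sD[symmetric] refl])
    finally show ?thesis by simp
  qed
  have indfg: "Np.indep_var ?cs f ?cs g"
    using Np.indep_var_distribution_eq[of ?cs f ?cs g] fm gm fd gd fgd by simp
  have lawg: "distr N ?cs g = distr M ?cs (\<lambda>\<omega>. (clump (\<lambda>z. X z \<omega>) y, clump_height (\<lambda>z. X z \<omega>) y))"
  proof -
    have "(\<lambda>\<omega>. (clump (\<lambda>z. X z \<omega>) y, clump_height (\<lambda>z. X z \<omega>) y)) = CH y \<circ> \<Phi>"
      by (simp add: CH_def \<Phi>_def fun_eq_iff)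
    moreover have "distr M ?cs (CH y \<circ> \<Phi>) = distr (distr M ?Q \<Phi>) ?cs (CH y)"
      by (rule distr_distr[symmetric, OF CHm \<Phi>m])
    ultimately show ?thesis using gd \<Phi>d by simp
  qed
  have fstm': "fst \<in> measurable N M" unfolding N_def by simp
  have fstd: "distr N M fst = M" unfolding N_def by (rule Q.distr_pair_fst)
  show ?thesis
    apply (rule exI[of _ N], rule exI[of _ fst], rule exI[of _ Y])
    using Nprob fstm' fstd indY Yzd AEN indfg lawg
    by (simp add: f_def[abs_def] g_def[abs_def])
qed

end
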